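(* Let $\Gamma$ be a finite simple graph on $n$ vertices and let $\alpha,\beta\models n$ be compositions such that $\beta$ refines $\alpha$ (i.e. $\alpha$ is obtained from $\beta$ by adding together some groups of consecutive parts). Then $\zeta_\alpha(\Gamma)\le\zeta_\beta(\Gamma)$.
   Context: For a coloring $\lambda:V\to\mathbb{N}$ of a finite simple graph $\Gamma$ with values $i_1<\dots<i_k$, let $I_j=\lambda^{-1}(\{i_1,\dots,i_j\})$, $I_0=\emptyset$. It is ordered if for each $j$, no two distinct vertices $u,w$ with $\lambda(u)=\lambda(w)=i_j$ are joined by a path in $\Gamma$ (possibly a single edge) all of whose internal vertices lie in $I_{j-1}$. Its type is $(|\lambda^{-1}(i_1)|,\dots,|\lambda^{-1}(i_k)|)$. For a composition $\alpha$ of $n$ with $k(\alpha)$ parts, $\zeta_\alpha(\Gamma)$ is the number of surjective ordered colorings $\lambda:V\to\{1,\dots,k(\alpha)\}$ of type $\alpha$. *)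

theory Defs
  imports Main "HOL-Library.FuncSet"
begin

definition simple_graph :: "'a set \<Rightarrow> ('a \<Rightarrow> 'a \<Rightarrow> bool) \<Rightarrow> bool" where
  "simple_graph V E \<longleftrightarrow> finite V \<and> (\<forall>u v. E u v \<longrightarrow> u \<in> V \<and> v \<in> V)
     \<and> (\<forall>u v. E u v \<longrightarrow> E v u) \<and> (\<forall>v. \<not> E v v)"

definition path_via :: "('a \<Rightarrow> 'a \<Rightarrow> bool) \<Rightarrow> 'a set \<Rightarrow> 'a \<Rightarrow> 'a \<Rightarrow> bool" where
  "path_via E S u w \<longleftrightarrow> (\<exists>xs. set xs \<subseteq> S \<and> distinct (u # xs @ [w])
      \<and> successively E (u # xs @ [w]))"

text \<open>Ordered coloring: for each colour value c (= i_j) of the colouring, the set I_{j-1}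
  consists of the vertices with colour smaller than c.\<close>
definition ordered_coloring :: "'a set \<Rightarrow> ('a \<Rightarrow> 'a \<Rightarrow> bool) \<Rightarrow> ('a \<Rightarrow> nat) \<Rightarrow> bool" where
  "ordered_coloring V E f \<longleftrightarrow>
     (\<forall>c \<in> f ` V. \<forall>u \<in> V. \<forall>w \<in> V. u \<noteq> w \<and> f u = c \<and> f w = c \<longrightarrow>
        \<not> path_via E {v \<in> V. f v < c} u w)"

definition coloring_type :: "'a set \<Rightarrow> ('a \<Rightarrow> nat) \<Rightarrow> nat list" where
  "coloring_type V f = map (\<lambda>c. card {v \<in> V. f v = c}) (sorted_list_of_set (f ` V))"

definition composition :: "nat \<Rightarrow> nat list \<Rightarrow> bool" where
  "composition n \<alpha> \<longleftrightarrow> (\<forall>a \<in> set \<alpha>. 0 < a) \<and> sum_list \<alpha> = n"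

definition refines :: "nat list \<Rightarrow> nat list \<Rightarrow> bool" where
  "refines \<beta> \<alpha> \<longleftrightarrow> (\<exists>bs :: nat list list. (\<forall>b \<in> set bs. b \<noteq> []) \<and>
       concat bs = \<beta> \<and> map sum_list bs = \<alpha>)"

definition zeta :: "nat list \<Rightarrow> 'a set \<Rightarrow> ('a \<Rightarrow> 'a \<Rightarrow> bool) \<Rightarrow> nat" where
  "zeta \<alpha> V E = card {f \<in> V \<rightarrow>\<^sub>E {1..length \<alpha>}. f ` V = {1..length \<alpha>}
      \<and> ordered_coloring V E f \<and> coloring_type V f = \<alpha>}"

end

theory Submission
  imports Defs
begin

lemma path_via_mono: "path_via E S u w \<Longrightarrow> S \<subseteq> T \<Longrightarrow> path_via E T u w"
  unfolding path_via_def by blast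

lemma key:
  assumes ord: "ordered_coloring V E f" and uV: "u\<in>V" "w\<in>V" "u\<noteq>w" "f u = f w"
    and p: "path_via E {v\<in>V. f v \<le> f u} u w"
  shows False
proof -
  obtain xs where xs: "set xs \<subseteq> {v\<in>V. f v \<le> f u}" "distinct (u # xs @ [w])"
    "successively E (u # xs @ [w])" using p unfolding path_via_def by blast
  show False
  proof (cases "\<exists>x\<in>set xs. f x = f u")
    case True
    then obtain ys z zs where sp: "xs = ys @ z # zs" "f z = f u" "\<forall>y\<in>set ys. \<not> f y = f u"
      by (auto elim!: split_list_first_propE)
    have zV: "z \<in> V" using xs(1) sp by auto
    have "set ys \<subseteq> {v\<in>V. f v < f u}" using xs(1) sp by fastforce
    moreover have "distinct (u # ys @ [z])" using xs(2) sp by auto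
    moreover have "successively E (u # ys @ [z])"
    proof -
      have "u # xs @ [w] = (u # ys @ [z]) @ (zs @ [w])" using sp by simp
      then show ?thesis using xs(3) by (simp only: successively_append_iff)
    qed
    ultimately have "path_via E {v\<in>V. f v < f u} u z" unfolding path_via_def by blast
    moreover have "u \<noteq> z" using xs(2) sp by auto
    ultimately show False using ord uV zV sp(2) unfolding ordered_coloring_def by force
  next
    case False
    then have "set xs \<subseteq> {v\<in>V. f v < f u}" using xs(1) by force
    then have "path_via E {v\<in>V. f v < f u} u w" using xs unfolding path_via_def by blast
    then show False using ord uV unfolding ordered_coloring_def by force
  qed
qed

lemma ctype:
  assumes "f ` V = {1..m}"
  shows "coloring_type V f = map (\<lambda>c. card {v\<in>V. f v = c}) [1..<Suc m]"
  using assms by (simp add: coloring_type_def atLeastLessThanSuc_atLeastAtMost[symmetric])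

lemma mem_char:
  "(f \<in> V \<rightarrow>\<^sub>E {1..length \<alpha>} \<and> f`V = {1..length \<alpha>} \<and> ordered_coloring V E f \<and> coloring_type V f = \<alpha>)
   \<longleftrightarrow> (f \<in> V \<rightarrow>\<^sub>E {1..length \<alpha>} \<and> f`V = {1..length \<alpha>} \<and> ordered_coloring V E f
       \<and> (\<forall>i<length \<alpha>. card {v\<in>V. f v = Suc i} = \<alpha>!i))"
proof -
  have "coloring_type V f = \<alpha> \<longleftrightarrow> (\<forall>i<length \<alpha>. card {v\<in>V. f v = Suc i} = \<alpha>!i)"
    if h: "f`V = {1..length \<alpha>}"
  proof -
    have "coloring_type V f = map (\<lambda>c. card {v\<in>V. f v = c}) [1..<Suc (length \<alpha>)]"
      by (rule ctype[OF h])
    moreover have "map (\<lambda>c. card {v\<in>V. f v = c}) [1..<Suc (length \<alpha>)] = \<alpha>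
        \<longleftrightarrow> (\<forall>i<length \<alpha>. card {v\<in>V. f v = Suc i} = \<alpha>!i)"
    proof
      assume eq: "map (\<lambda>c. card {v\<in>V. f v = c}) [1..<Suc (length \<alpha>)] = \<alpha>"
      show "\<forall>i<length \<alpha>. card {v\<in>V. f v = Suc i} = \<alpha>!i"
      proof (intro allI impI)
        fix i assume i: "i < length \<alpha>"
        have "\<alpha>!i = map (\<lambda>c. card {v\<in>V. f v = c}) [1..<Suc (length \<alpha>)] ! i" using eq by simp
        also have "\<dots> = card {v\<in>V. f v = [1..<Suc (length \<alpha>)] ! i}"
          by (rule nth_map) (use i in simp)
        also have "[1..<Suc (length \<alpha>)] ! i = Suc i" using i by (subst nth_upt) simp_all
        finally show "card {v\<in>V. f v = Suc i} = \<alpha>!i" by simp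
      qed
    next
      assume all: "\<forall>i<length \<alpha>. card {v\<in>V. f v = Suc i} = \<alpha>!i"
      show "map (\<lambda>c. card {v\<in>V. f v = c}) [1..<Suc (length \<alpha>)] = \<alpha>"
      proof (rule nth_equalityI)
        show "length (map (\<lambda>c. card {v\<in>V. f v = c}) [1..<Suc (length \<alpha>)]) = length \<alpha>"
          by (simp del: upt_Suc)
      next
        fix i assume i: "i < length (map (\<lambda>c. card {v\<in>V. f v = c}) [1..<Suc (length \<alpha>)])"
        then have i': "i < length \<alpha>" by (simp del: upt_Suc)
        have "map (\<lambda>c. card {v\<in>V. f v = c}) [1..<Suc (length \<alpha>)] ! i = card {v\<in>V. f v = [1..<Suc (length \<alpha>)] ! i}"
          by (rule nth_map) (use i' in simp)
        also have "[1..<Suc (length \<alpha>)] ! i = Suc i" using i' by (subst nth_upt) simp_all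
        finally show "map (\<lambda>c. card {v\<in>V. f v = c}) [1..<Suc (length \<alpha>)] ! i = \<alpha> ! i"
          using all i' by simp
      qed
    qed
    ultimately show ?thesis by simp
  qed
  then show ?thesis by blast
qed

lemma step:
  fixes xs ys :: "nat list" and V :: "'a set"
  assumes fin: "finite V" and a: "0<a" and b: "0<b"
  shows "zeta (xs@[a+b]@ys) V E \<le> zeta (xs@[a,b]@ys) V E"
proof -
  define \<alpha> where "\<alpha> = xs@[a+b]@ys"
  define \<beta> where "\<beta> = xs@[a,b]@ys"
  define k where "k = Suc (length xs)"
  define m where "m = length \<alpha>"
  have lb: "length \<beta> = Suc m" by (simp add: \<alpha>_def \<beta>_def m_def)
  have km: "k \<le> m" by (simp add: \<alpha>_def k_def m_def)
  define A where "A = {f \<in> V \<rightarrow>\<^sub>E {1..length \<alpha>}. f ` V = {1..length \<alpha>} \<and> ordered_coloring V E f \<and> coloring_type V f = \<alpha>}"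
  define B where "B = {f \<in> V \<rightarrow>\<^sub>E {1..length \<beta>}. f ` V = {1..length \<beta>} \<and> ordered_coloring V E f \<and> coloring_type V f = \<beta>}"
  define S where "S f = (SOME S. S \<subseteq> {v\<in>V. f v = k} \<and> card S = a)" for f :: "'a \<Rightarrow> nat"
  define G where "G f = (\<lambda>v. if v\<in>V then (if f v < k then f v else if f v = k then (if v \<in> S f then k else Suc k) else Suc (f v)) else undefined)" for f
  have inv: "f v = (if G f v \<le> k then G f v else G f v - 1)" if "v \<in> V" for f v
    using that by (auto simp: G_def)
  have mono: "G f u < G f v" if "u \<in> V" "v \<in> V" "f u < f v" for f u v
    using that by (auto simp: G_def)
  have "inj_on G A"
  proof (rule inj_onI)
    fix f f' assume f: "f\<in>A" "f'\<in>A" and eq: "G f = G f'"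
    show "f = f'"
    proof
      fix v show "f v = f' v"
      proof (cases "v\<in>V")
        case True
        then show ?thesis using inv[of v f] inv[of v f'] eq by simp
      next
        case False then show ?thesis using f by (auto simp: A_def PiE_def extensional_def)
      qed
    qed
  qed
  moreover have "G ` A \<subseteq> B"
  proof
    fix g assume "g \<in> G ` A"
    then obtain f where fA: "f \<in> A" and g: "g = G f" by blast
    have fP: "f \<in> V \<rightarrow>\<^sub>E {1..m}" and fs: "f`V = {1..m}" and ford: "ordered_coloring V E f"
      and fc: "\<forall>i<m. card {v\<in>V. f v = Suc i} = \<alpha>!i"
      using fA mem_char[of f V \<alpha> E] unfolding A_def m_def by auto
    have rng: "1 \<le> f v \<and> f v \<le> m" if "v \<in> V" for v using fP that by auto
    define C where "C = {v\<in>V. f v = k}"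
    have finC: "finite C" using fin C_def by simp
    have cardC: "card C = a+b"
      using fc[rule_format, of "length xs"] by (simp add: C_def k_def \<alpha>_def m_def)
    have ex: "\<exists>T. T \<subseteq> C \<and> card T = a"
      using obtain_subset_with_card_n[of a C] cardC by (metis le_add1)
    have SS: "S f \<subseteq> C \<and> card (S f) = a" unfolding S_def C_def
      using someI_ex[OF ex[unfolded C_def]] .
    have cardCS: "card (C - S f) = b" using SS cardC finC
      by (metis add_diff_cancel_left' card_Diff_subset finite_subset)
    have SV: "S f \<subseteq> V" using SS C_def by auto
    have gP: "G f \<in> V \<rightarrow>\<^sub>E {1..Suc m}"
    proof (rule PiE_I)
      fix v assume v: "v\<in>V" then show "G f v \<in> {1..Suc m}" using rng[OF v] km by (auto simp: G_def)
    next
      fix v assume "v\<notin>V" then show "G f v = undefined" by (simp add: G_def)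
    qed
    have gs: "G f ` V = {1..Suc m}"
    proof
      show "G f ` V \<subseteq> {1..Suc m}" using gP by auto
    next
      show "{1..Suc m} \<subseteq> G f ` V"
      proof
        fix c assume c: "c \<in> {1..Suc m}"
        consider "c < k" | "c = k" | "c = Suc k" | "c > Suc k" by linarith
        then show "c \<in> G f ` V"
        proof cases
          case 1
          then have "c \<in> f ` V" using fs c km by auto
          then obtain v where "v \<in> V" "f v = c" by auto
          then show ?thesis using 1 by (auto simp: G_def intro!: image_eqI[of _ _ v])
        next
          case 2
          have "S f \<noteq> {}" using SS a by auto
          then obtain v where v: "v \<in> S f" by auto
          then have "v \<in> V" "f v = k" using SS C_def by auto
          then show ?thesis using 2 v by (auto simp: G_def intro!: image_eqI[of _ _ v])
        next
          case 3
          have "C - S f \<noteq> {}"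
          proof
            assume "C - S f = {}" then have "card (C - S f) = 0" by (simp only: card.empty)
            then show False using cardCS b by simp
          qed
          then obtain v where v: "v \<in> C" "v \<notin> S f" by auto
          then have "v \<in> V" "f v = k" using C_def by auto
          then show ?thesis using 3 v by (auto simp: G_def intro!: image_eqI[of _ _ v])
        next
          case 4
          then have "c - 1 \<in> f ` V" using fs c km by auto
          then obtain v where "v \<in> V" "f v = c - 1" by auto
          then show ?thesis using 4 by (auto simp: G_def intro!: image_eqI[of _ _ v])
        qed
      qed
    qed
    have gord: "ordered_coloring V E (G f)"
      unfolding ordered_coloring_def
    proof (intro ballI impI notI)
      fix c u w assume uV: "u \<in> V" "w \<in> V" and h: "u \<noteq> w \<and> G f u = c \<and> G f w = c"
        and p: "path_via E {v \<in> V. G f v < c} u w"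
      have "f u = f w" using inv[OF uV(1), of f] inv[OF uV(2), of f] h by simp
      moreover have "{v \<in> V. G f v < c} \<subseteq> {v\<in>V. f v \<le> f u}"
      proof (rule subsetI)
        fix v assume "v \<in> {v\<in>V. G f v < c}"
        then have v: "v\<in>V" "G f v < G f u" using h by auto
        show "v \<in> {v\<in>V. f v \<le> f u}"
        proof (rule ccontr)
          assume "v \<notin> {v\<in>V. f v \<le> f u}"
          then have "f u < f v" using v by auto
          then show False using mono[OF uV(1) v(1), of f] v(2) by simp
        qed
      qed
      moreover note path_via_mono[OF p]
      ultimately have "path_via E {v\<in>V. f v \<le> f u} u w" "f u = f w" by auto
      then show False using key[OF ford uV] h by blast
    qed
    have gc: "\<forall>i<Suc m. card {v\<in>V. G f v = Suc i} = \<beta>!i"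
    proof (intro allI impI)
      fix i assume i: "i < Suc m"
      consider "Suc i < k" | "Suc i = k" | "i = k" | "Suc i > Suc k" by linarith
      then show "card {v\<in>V. G f v = Suc i} = \<beta>!i"
      proof cases
        case 1
        then have "{v\<in>V. G f v = Suc i} = {v\<in>V. f v = Suc i}" by (auto simp: G_def)
        moreover have "\<beta>!i = \<alpha>!i" using 1 by (simp add: \<alpha>_def \<beta>_def k_def nth_append)
        ultimately show ?thesis using fc 1 km by simp
      next
        case 2
        then have "{v\<in>V. G f v = Suc i} = S f" using SS SV by (auto simp: G_def C_def)
        moreover have "\<beta>!i = a" using 2 by (simp add: \<beta>_def k_def nth_append)
        ultimately show ?thesis using SS by simp
      next
        case 3
        then have "{v\<in>V. G f v = Suc i} = C - S f" using SS SV by (auto simp: G_def C_def)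
        moreover have "\<beta>!i = b" using 3 by (simp add: \<beta>_def k_def nth_append)
        ultimately show ?thesis using cardCS by simp
      next
        case 4
        then obtain j where j: "i = length xs + 2 + j" unfolding k_def
          by (intro that[of "i - length xs - 2"]) simp
        have "{v\<in>V. G f v = Suc i} = {v\<in>V. f v = i}" using 4 by (auto simp: G_def)
        moreover have "\<beta>!i = \<alpha>!(i - 1)" using j by (simp add: \<alpha>_def \<beta>_def nth_append)
        moreover have "i - 1 < m" using i 4 by simp
        moreover have "Suc (i - 1) = i" using 4 by simp
        ultimately show ?thesis using fc by metis
      qed
    qed
    show "g \<in> B" unfolding B_def g
      using mem_char[of "G f" V \<beta> E] gP gs gord gc lb by simp
  qed
  moreover have "finite B"
    by (rule finite_subset[of _ "V \<rightarrow>\<^sub>E {1..length \<beta>}"]) (auto simp: B_def fin finite_PiE)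
  ultimately have "card A \<le> card B" by (meson card_inj_on_le)
  thus ?thesis by (simp add: zeta_def A_def B_def \<alpha>_def \<beta>_def)
qed

lemma len_concat_ge: "\<forall>b\<in>set bs. b \<noteq> [] \<Longrightarrow> length bs \<le> length (concat bs)"
proof (induction bs)
  case (Cons a bs)
  then have h: "0 < length a" "length bs \<le> length (concat bs)" by auto
  have "length (concat (a # bs)) = length a + length (concat bs)" by simp
  moreover have "length (a # bs) = Suc (length bs)" by simp
  ultimately show ?case using h by linarith
qed simp

lemma refine_zeta:
  assumes fin: "finite V"
  shows "(\<forall>b\<in>set bs. b \<noteq> []) \<Longrightarrow> (\<forall>x\<in>set (concat bs). 0 < (x::nat))
    \<Longrightarrow> zeta (map sum_list bs) V E \<le> zeta (concat bs) V E"
proof (induction "length (concat bs) - length bs" arbitrary: bs rule: less_induct)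
  case less
  show ?case
  proof (cases "\<exists>b\<in>set bs. 2 \<le> length b")
    case False
    have single: "\<forall>b\<in>set bs. \<exists>x. b = [x]"
    proof
      fix b assume b: "b \<in> set bs"
      have "b \<noteq> []" using less.prems(1) b by blast
      then obtain x r where xr: "b = x # r" by (meson neq_Nil_conv)
      moreover have "r = []" using False b xr by (cases r) auto
      ultimately show "\<exists>x. b = [x]" by simp
    qed
    have "map sum_list bs = concat bs" using single by (induction bs) auto
    then show ?thesis by simp
  next
    case True
    then obtain P b Q where bs: "bs = P @ b # Q" and lb: "2 \<le> length b" by (meson split_list)
    have "\<exists>x y r. b = x # y # r" using lb by (auto simp: numeral_2_eq_2 Suc_le_length_iff)
    then obtain x y r where b: "b = x # y # r" by blast
    define bs' where "bs' = P @ [x] # (y#r) # Q"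
    have c: "concat bs' = concat bs" by (simp add: bs b bs'_def)
    have ne: "\<forall>b\<in>set bs'. b \<noteq> []" using less.prems(1) by (auto simp: bs bs'_def)
    have "length bs \<le> length (concat bs) - 1"
    proof -
      have "length P \<le> length (concat P)" "length Q \<le> length (concat Q)"
        using less.prems(1) len_concat_ge[of P] len_concat_ge[of Q] by (auto simp: bs)
      then show ?thesis by (simp add: bs b)
    qed
    then have lt: "length (concat bs') - length bs' < length (concat bs) - length bs"
      by (simp add: c bs'_def bs b)
    have IH: "zeta (map sum_list bs') V E \<le> zeta (concat bs') V E"
      using less.hyps[OF lt ne] less.prems(2) c by simp
    have x0: "0 < x" using less.prems(2) by (simp add: bs b)
    have y0: "0 < sum_list (y#r)" using less.prems(2) by (simp add: bs b)
    have "zeta (map sum_list bs) V E \<le> zeta (map sum_list bs') V E"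
      using step[OF fin x0 y0, of "map sum_list P" "map sum_list Q" E]
      by (simp add: bs b bs'_def)
    then show ?thesis using IH c by simp
  qed
qed

theorem mainTheorem13:
  fixes V :: "'a set" and E :: "'a \<Rightarrow> 'a \<Rightarrow> bool" and n :: nat and \<alpha> \<beta> :: "nat list"
  assumes "simple_graph V E" and "card V = n"
    and "composition n \<alpha>" and "composition n \<beta>" and "refines \<beta> \<alpha>"
  shows "zeta \<alpha> V E \<le> zeta \<beta> V E"
proof -
  have fin: "finite V" using assms(1) by (simp add: simple_graph_def)
  obtain bs where bs: "\<forall>b\<in>set bs. b \<noteq> []" "concat bs = \<beta>" "map sum_list bs = \<alpha>"
    using assms(5) unfolding refines_def by blast
  have "\<forall>x\<in>set (concat bs). 0 < x" using assms(4) bs(2) by (simp add: composition_def)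
  then show ?thesis using refine_zeta[OF fin bs(1)] bs by simp
qed

end
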